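(* For each $f\in L^\infty(\mathbb{R}^{d_1+d_2})$ there exists a sparse family $\mathcal{S}$ of dyadic rectangles such that $$\mathcal{M}_{\mathscr{D}\times\mathscr{D}}f(x)\lesssim \mathcal{P}^{\frac12}_{\mathscr{D}\times\mathscr{D}}(\mathcal{M}_\mathcal{S}f)(x),\qquad x\in\mathbb{R}^{d_1+d_2},$$ with implicit constant independent of $f$.
   Context: A dyadic rectangle is a set $Q_1\times Q_2$ with $Q_1\in\mathscr{D}(\mathbb{R}^{d_1})$, $Q_2\in\mathscr{D}(\mathbb{R}^{d_2})$ (standard dyadic grids). $\langle f\rangle_R=\frac1{|R|}\int_Rf$. $\mathcal{M}_{\mathscr{D}\times\mathscr{D}}f(x)=\sup_{x\in R}|\langle f\rangle_R|$ over dyadic rectangles $R$. For a set $\Omega$ of positive finite measure and measurable $g$, $\mathsf{P}^r_\Omega(g):=\inf\{\lambda\in\mathbb{R}:|\{x\in\Omega:g(x)>\lambda\}|\le r|\Omega|\}$, and $\mathcal{P}^r_{\mathscr{D}\times\mathscr{D}}g(x)=\sup_{x\in R}\mathsf{P}^r_R(|g|)$ over dyadic rectangles $R$. A family $\mathcal{S}$ of dyadic rectangles is sparse if there are pairwise disjoint sets $E_R\subset R$, $R\in\mathcal{S}$, with $|E_R|\ge\frac12|R|$; $\mathcal{M}_\mathcal{S}f(x)=\sup_{R\in\mathcal{S}}|\langle f\rangle_R|\mathbf{1}_R(x)$. *)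

theory Defs
  imports "HOL-Analysis.Analysis"
begin

definition dyadic_cube :: "int \<Rightarrow> ('n::finite \<Rightarrow> int) \<Rightarrow> (real^'n) set" where
  "dyadic_cube k m = {x. \<forall>i. 2 powr (real_of_int k) * real_of_int (m i) \<le> x $ i
                          \<and> x $ i < 2 powr (real_of_int k) * (real_of_int (m i) + 1)}"

definition dyadic_grid :: "(real^'n::finite) set set" where
  "dyadic_grid = {Q. \<exists>k m. Q = dyadic_cube k m}"

definition dyadic_rects :: "((real^'n::finite) \<times> (real^'m::finite)) set set" where
  "dyadic_rects = {Q1 \<times> Q2 | Q1 Q2. Q1 \<in> dyadic_grid \<and> Q2 \<in> dyadic_grid}"

definition avg :: "('a::euclidean_space \<Rightarrow> real) \<Rightarrow> 'a set \<Rightarrow> real" where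
  "avg f R = (1 / measure lebesgue R) * (LINT x:R|lebesgue. f x)"

definition strong_max :: "((real^'n::finite) \<times> (real^'m::finite) \<Rightarrow> real)
     \<Rightarrow> (real^'n) \<times> (real^'m) \<Rightarrow> ereal" where
  "strong_max f x = (SUP R \<in> {R \<in> dyadic_rects. x \<in> R}. ereal \<bar>avg f R\<bar>)"

definition Pquant :: "real \<Rightarrow> 'a::euclidean_space set \<Rightarrow> ('a \<Rightarrow> ereal) \<Rightarrow> ereal" where
  "Pquant r \<Omega> g = Inf (ereal ` {t::real.
      emeasure lebesgue {x \<in> \<Omega>. g x > ereal t} \<le> ereal r * emeasure lebesgue \<Omega>})"

definition Pmax :: "real \<Rightarrow> ((real^'n::finite) \<times> (real^'m::finite) \<Rightarrow> ereal)
     \<Rightarrow> (real^'n) \<times> (real^'m) \<Rightarrow> ereal" where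
  "Pmax r g x = (SUP R \<in> {R \<in> dyadic_rects. x \<in> R}. Pquant r R (\<lambda>y. \<bar>g y\<bar>))"

definition sparse :: "((real^'n::finite) \<times> (real^'m::finite)) set set \<Rightarrow> bool" where
  "sparse S \<longleftrightarrow> S \<subseteq> dyadic_rects \<and>
     (\<exists>E. (\<forall>R\<in>S. E R \<subseteq> R \<and> E R \<in> sets lebesgue
                  \<and> emeasure lebesgue (E R) \<ge> ereal (1/2) * emeasure lebesgue R)
        \<and> (\<forall>R\<in>S. \<forall>R'\<in>S. R \<noteq> R' \<longrightarrow> E R \<inter> E R' = {}))"

text \<open>Sparse maximal function; the supremum of the nonnegative quantities
  over an empty family is taken to be 0.\<close>
definition sparse_max :: "((real^'n::finite) \<times> (real^'m::finite)) set set
     \<Rightarrow> ((real^'n) \<times> (real^'m) \<Rightarrow> real) \<Rightarrow> (real^'n) \<times> (real^'m) \<Rightarrow> ereal" where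
  "sparse_max S f x = Sup (insert 0 ((\<lambda>R. ereal (\<bar>avg f R\<bar> * indicator R x)) ` S))"

definition Linfty :: "('a::euclidean_space \<Rightarrow> real) \<Rightarrow> bool" where
  "Linfty f \<longleftrightarrow> f \<in> borel_measurable lebesgue \<and> (\<exists>B. AE x in lebesgue. \<bar>f x\<bar> \<le> B)"

end

theory Submission
  imports Defs
begin


definition greedyP :: "'a measure \<Rightarrow> 'a set set \<Rightarrow> 'a set \<Rightarrow> 'a set set \<Rightarrow> ('a set \<Rightarrow> 'a set) \<Rightarrow> bool" where
  "greedyP M C W0 S E \<longleftrightarrow> S \<subseteq> C \<and>
     (\<forall>R\<in>S. E R \<subseteq> R - W0 \<and> E R \<in> sets M \<and> measure M R / 2 \<le> measure M (E R)) \<and>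
     (\<forall>R\<in>S. \<forall>R'\<in>S. R \<noteq> R' \<longrightarrow> E R \<inter> E R' = {}) \<and>
     (\<forall>R\<in>C - S. measure M R / 2 < measure M (R \<inter> (W0 \<union> \<Union>(E ` S))))"

lemma greedy:
  assumes cC: "countable C"
    and CR: "\<And>R. R \<in> C \<Longrightarrow> R \<in> sets M \<and> 0 < measure M R \<and> emeasure M R < \<infinity>"
    and W0: "W0 \<in> sets M"
  shows "\<exists>S E. greedyP M C W0 S E"
proof (cases "C = {}")
  case True
  then show ?thesis by (auto simp: greedyP_def)
next
  case False
  define r where "r = from_nat_into C"
  have rC: "range r = C" using range_from_nat_into[OF False cC] r_def by simp
  have rprops: "r i \<in> sets M" "0 < measure M (r i)" "emeasure M (r i) < \<infinity>" for i
    using CR[of "r i"] rC by auto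
  define W where "W = rec_nat W0 (\<lambda>i Wi. if measure M (r i) / 2 \<le> measure M (r i - Wi) then Wi \<union> r i else Wi)"
  define sel where "sel i \<longleftrightarrow> measure M (r i) / 2 \<le> measure M (r i - W i)" for i
  have W_0: "W 0 = W0" by (simp add: W_def)
  have W_S: "W (Suc i) = (if sel i then W i \<union> r i else W i)" for i
    by (simp add: W_def sel_def)
  have Wsets: "W i \<in> sets M" for i
    by (induction i) (auto simp: W_0 W_S W0 rprops)
  have Wmono: "W i \<subseteq> W j" if "i \<le> j" for i j
    using that
  proof (induction j)
    case 0 then show ?case by simp
  next
    case (Suc j) then show ?case by (auto simp: W_S le_Suc_eq)
  qed
  have rsub: "r i \<subseteq> W (Suc i)" if "sel i" for i using that by (simp add: W_S)
  have uniq0: "False" if "sel i" "sel j" "r i = r j" "i < j" for i j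
  proof -
    have "r j \<subseteq> W j" using rsub[OF that(1)] Wmono[of "Suc i" j] that by auto
    then have e: "r j - W j = {}" by auto
    show False using that(2) rprops(2)[of j] by (simp add: sel_def e)
  qed
  have uniq: "i = j" if "sel i" "sel j" "r i = r j" for i j
    using uniq0[of i j] uniq0[of j i] that by (metis linorder_neqE_nat)
  define S where "S = r ` {i. sel i}"
  define E where "E R = R - W (SOME i. sel i \<and> r i = R)" for R
  have Eri: "E (r i) = r i - W i" if "sel i" for i
  proof -
    have "sel (SOME j. sel j \<and> r j = r i) \<and> r (SOME j. sel j \<and> r j = r i) = r i"
      by (rule someI[of _ i]) (use that in auto)
    then have "(SOME j. sel j \<and> r j = r i) = i" using uniq that by blast
    then show ?thesis by (simp add: E_def)
  qed
  have cS: "countable S" unfolding S_def by simp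
  have Esets: "E R \<in> sets M" if "R \<in> S" for R
    using that Eri Wsets rprops by (auto simp: S_def)
  have Wsub: "W i \<subseteq> W0 \<union> \<Union>(E ` S)" for i
  proof (induction i)
    case 0 then show ?case by (simp add: W_0)
  next
    case (Suc i)
    show ?case
    proof (cases "sel i")
      case True
      have "W (Suc i) = W i \<union> E (r i)" using True by (auto simp: W_S Eri)
      moreover have "r i \<in> S" using True by (auto simp: S_def)
      ultimately show ?thesis using Suc by auto
    qed (use Suc in \<open>auto simp: W_S\<close>)
  qed
  have UEsets: "W0 \<union> \<Union>(E ` S) \<in> sets M"
    using W0 Esets cS by (intro sets.Un sets.countable_UN') auto
  have "greedyP M C W0 S E"
    unfolding greedyP_def
  proof (intro conjI ballI impI)
    show "S \<subseteq> C" using rC by (auto simp: S_def)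
  next
    fix R assume "R \<in> S"
    then obtain i where i: "sel i" "R = r i" by (auto simp: S_def)
    show "E R \<subseteq> R - W0" using i Eri Wmono[of 0 i] W_0 by auto
    show "E R \<in> sets M" using Esets \<open>R \<in> S\<close> .
    show "measure M R / 2 \<le> measure M (E R)" using i Eri sel_def by simp
  next
    fix R R' assume "R \<in> S" "R' \<in> S" "R \<noteq> R'"
    then obtain i j where i: "sel i" "R = r i" and j: "sel j" "R' = r j" by (auto simp: S_def)
    have ij: "i \<noteq> j" using i j \<open>R \<noteq> R'\<close> by auto
    have d: "E (r a) \<inter> E (r b) = {}" if "sel a" "sel b" "a < b" for a b
    proof -
      have "E (r a) \<subseteq> W b" using Eri[OF that(1)] rsub[OF that(1)] Wmono[of "Suc a" b] that(3) by auto
      then show ?thesis using Eri[OF that(2)] by auto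
    qed
    show "E R \<inter> E R' = {}"
      using ij d[of i j] d[of j i] i j by (metis inf_commute linorder_neqE_nat)
  next
    fix R assume R: "R \<in> C - S"
    then obtain i where i: "R = r i" using rC by auto
    have ns: "\<not> sel i" using R i by (auto simp: S_def)
    have md: "measure M (r i - W i) = measure M (r i) - measure M (r i \<inter> W i)"
    proof -
      have "r i - W i = r i - (r i \<inter> W i)" by auto
      moreover have "emeasure M (r i) \<noteq> \<infinity>" using rprops(3)[of i] by simp
      moreover have "measure M (r i - (r i \<inter> W i)) = measure M (r i) - measure M (r i \<inter> W i)"
        using calculation(2) rprops(1)[of i] Wsets[of i] by (intro measure_Diff) auto
      ultimately show ?thesis by simp
    qed
    have lt: "measure M (r i) / 2 < measure M (r i \<inter> W i)" using ns md by (simp add: sel_def)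
    have fm: "r i \<inter> (W0 \<union> \<Union>(E ` S)) \<in> fmeasurable M"
    proof (rule fmeasurableI2)
      show "r i \<in> fmeasurable M" using rprops(1)[of i] rprops(3)[of i] by (rule fmeasurableI)
      show "r i \<inter> (W0 \<union> \<Union>(E ` S)) \<subseteq> r i" by (rule Int_lower1)
      show "r i \<inter> (W0 \<union> \<Union>(E ` S)) \<in> sets M" using rprops(1)[of i] UEsets by (rule sets.Int)
    qed
    have "measure M (r i \<inter> W i) \<le> measure M (r i \<inter> (W0 \<union> \<Union>(E ` S)))"
    proof (rule measure_mono_fmeasurable[OF _ _ fm])
      show "r i \<inter> W i \<subseteq> r i \<inter> (W0 \<union> \<Union>(E ` S))" using Wsub[of i] by blast
      show "r i \<inter> W i \<in> sets M" using rprops(1)[of i] Wsets[of i] by (rule sets.Int)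
    qed
    then show "measure M R / 2 < measure M (R \<inter> (W0 \<union> \<Union>(E ` S)))" using lt i by simp
  qed
  then show ?thesis by blast
qed



lemma cube_form:
  assumes "Q \<in> (dyadic_grid :: (real^'n::finite) set set)"
  shows "\<exists>a b. Q = {x. \<forall>i. a$i \<le> x$i \<and> x$i < b$i} \<and> (\<forall>i. a$i < (b$i::real))"
proof -
  obtain k m where Q: "Q = dyadic_cube k m" using assms by (auto simp: dyadic_grid_def)
  define a :: "real^'n" where "a = (\<chi> i. 2 powr real_of_int k * real_of_int (m i))"
  define b :: "real^'n" where "b = (\<chi> i. 2 powr real_of_int k * (real_of_int (m i) + 1))"
  have "Q = {x. \<forall>i. a$i \<le> x$i \<and> x$i < b$i}" by (simp add: Q dyadic_cube_def a_def b_def)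
  moreover have "\<forall>i. a$i < b$i" by (simp add: a_def b_def)
  ultimately show ?thesis by blast
qed

lemma open_pos_lebesgue:
  fixes S :: "'a::euclidean_space set"
  assumes "open S" "x \<in> S"
  shows "0 < emeasure lebesgue S"
proof -
  obtain e where e: "0 < e" "ball x e \<subseteq> S" using openE[OF assms] by blast
  then obtain a b where box: "x \<in> box a b" "box a b \<subseteq> S"
    by (metis rational_boxes order_trans)
  then have "0 < emeasure lebesgue (box a b)"
    by (auto simp: emeasure_lborel_box_eq mem_box algebra_simps intro!: prod_pos)
  also have "\<dots> \<le> emeasure lebesgue S"
    using assms box by (auto intro!: emeasure_mono)
  finally show ?thesis .
qed

lemma rect_props:
  assumes "R \<in> (dyadic_rects :: ((real^'n::finite) \<times> (real^'m::finite)) set set)"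
  shows "R \<in> sets lebesgue" "R \<in> lmeasurable" "0 < measure lebesgue R" "emeasure lebesgue R < \<infinity>"
proof -
  obtain Q1 Q2 where R: "R = Q1 \<times> Q2" "Q1 \<in> dyadic_grid" "Q2 \<in> dyadic_grid"
    using assms by (auto simp: dyadic_rects_def)
  obtain a b where Q1: "Q1 = {x. \<forall>i. a$i \<le> x$i \<and> x$i < b$i}" "\<forall>i. a$i < (b$i::real)"
    using cube_form[OF R(2)] by blast
  obtain c d where Q2: "Q2 = {x. \<forall>i. c$i \<le> x$i \<and> x$i < d$i}" "\<forall>i. c$i < (d$i::real)"
    using cube_form[OF R(3)] by blast
  have "Q1 \<in> sets borel" unfolding Q1 by measurable
  moreover have "Q2 \<in> sets borel" unfolding Q2 by measurable
  ultimately have "Q1 \<times> Q2 \<in> sets (borel \<Otimes>\<^sub>M borel)" by (rule pair_measureI)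
  then have "Q1 \<times> Q2 \<in> sets borel" by (simp only: borel_prod)
  then have Rb: "R \<in> sets borel" using R(1) by simp
  then have "R \<in> sets lborel" by simp
  then show Rl: "R \<in> sets lebesgue" by (rule sets_completionI_sets)
  have "R \<subseteq> cbox a b \<times> cbox c d" using R Q1 Q2 by (auto simp: mem_box_cart less_imp_le)
  moreover have "bounded (cbox a b \<times> cbox c d)" by (intro bounded_Times bounded_cbox)
  ultimately have "bounded R" by (rule bounded_subset[rotated])
  then show Rf: "R \<in> lmeasurable" using Rl by (rule bounded_set_imp_lmeasurable)
  then show fin: "emeasure lebesgue R < \<infinity>" unfolding fmeasurable_def by blast
  have sub: "box a b \<times> box c d \<subseteq> R" using R Q1 Q2 by (auto simp: mem_box_cart less_imp_le)
  have op: "open (box a b \<times> box c d)" by (intro open_Times open_box)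
  have mem: "((1/2) *\<^sub>R (a+b), (1/2) *\<^sub>R (c+d)) \<in> box a b \<times> box c d" using Q1(2) Q2(2)
    by (auto simp: mem_box_cart field_simps vector_scaleR_component)
  have "0 < emeasure lebesgue (box a b \<times> box c d)" by (rule open_pos_lebesgue[OF op mem])
  also have "\<dots> \<le> emeasure lebesgue R" using sub Rl by (intro emeasure_mono) auto
  finally have "0 < emeasure lebesgue R" .
  then show "0 < measure lebesgue R" using fin
    by (simp add: emeasure_eq_ennreal_measure measure_nonneg zero_less_measure_iff)
qed

lemma countable_fun_int: "countable (UNIV :: ('k::finite \<Rightarrow> int) set)"
proof -
  have "(UNIV :: ('k \<Rightarrow> int) set) = PiE UNIV (\<lambda>_. UNIV)" by auto
  then show ?thesis by (simp add: countable_PiE)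
qed

lemma countable_grid: "countable (dyadic_grid :: (real^'k::finite) set set)"
proof -
  have "dyadic_grid = (\<lambda>(k, m). dyadic_cube k m) ` (UNIV \<times> (UNIV :: ('k \<Rightarrow> int) set))"
    by (auto simp: dyadic_grid_def)
  moreover have "countable ((UNIV::int set) \<times> (UNIV :: ('k \<Rightarrow> int) set))"
    using countable_fun_int by (intro countable_SIGMA) auto
  ultimately show ?thesis by (metis countable_image)
qed

lemma countable_rects: "countable (dyadic_rects :: ((real^'n::finite) \<times> (real^'m::finite)) set set)"
proof -
  have "dyadic_rects = (\<lambda>(Q1, Q2). Q1 \<times> Q2) ` ((dyadic_grid :: (real^'n) set set) \<times> (dyadic_grid :: (real^'m) set set))"
    by (auto simp: dyadic_rects_def)
  moreover have "countable ((dyadic_grid :: (real^'n) set set) \<times> (dyadic_grid :: (real^'m) set set))"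
    using countable_grid countable_grid by (intro countable_SIGMA) auto
  ultimately show ?thesis by (metis countable_image)
qed



lemma avg_bound:
  fixes f :: "'a::euclidean_space \<Rightarrow> real"
  assumes fm: "f \<in> borel_measurable lebesgue" and B: "AE x in lebesgue. \<bar>f x\<bar> \<le> B"
    and R: "R \<in> lmeasurable" and B0: "0 \<le> B"
  shows "\<bar>avg f R\<bar> \<le> B"
proof -
  have Rs: "R \<in> sets lebesgue" and Rf: "emeasure lebesgue R < \<infinity>" using R by (auto simp: fmeasurable_def)
  have si: "set_integrable lebesgue R f"
    unfolding set_integrable_def
    by (rule integrableI_bounded_set_indicator[OF Rs fm Rf, of B]) (use B in auto)
  have sc: "set_integrable lebesgue R (\<lambda>_. B)"
    unfolding set_integrable_def
    by (rule integrableI_bounded_set_indicator[OF Rs _ Rf, where B=B]) (use B0 in auto)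
  have "\<bar>LINT x:R|lebesgue. f x\<bar> \<le> (LINT x:R|lebesgue. norm (f x))"
    using set_integral_norm_bound[OF si] by simp
  also have "\<dots> \<le> (LINT x:R|lebesgue. B)"
    using set_integrable_abs[OF si] sc B
    by (intro set_integral_mono_AE) (auto elim!: eventually_mono)
  also have "\<dots> = B * measure lebesgue R"
    using Rf by (simp add: set_lebesgue_integral_def mult.commute)
  finally have I: "\<bar>LINT x:R|lebesgue. f x\<bar> \<le> B * measure lebesgue R" .
  show ?thesis
  proof (cases "measure lebesgue R = 0")
    case True then show ?thesis by (simp add: avg_def B0)
  next
    case False
    then have "0 < measure lebesgue R" using measure_nonneg[of lebesgue R] by linarith
    then show ?thesis using I by (simp add: avg_def abs_mult field_simps)
  qed
qed



lemma half_ennreal: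
  assumes "0 \<le> m" "x = ennreal m"
  shows "e2ennreal (ereal (1/2)) * x = ennreal (m / 2)"
proof -
  have "e2ennreal (ereal (1/2)) = ennreal (1/2)" by (rule e2ennreal_ereal)
  moreover have "ennreal (1/2) * ennreal m = ennreal (1/2 * m)" by (rule sym, rule ennreal_mult) (use assms in auto)
  ultimately show ?thesis using assms(2) by simp
qed

lemma pow_cmp:
  fixes B :: real assumes "0 < B" "B / 2^a < B / 2^b" shows "b < a"
proof -
  have "(2::real)^b < 2^a" using assms by (simp add: field_simps)
  then show ?thesis by simp
qed

lemma pow_mono_div:
  fixes B :: real assumes "0 < B" "k \<le> n" shows "B / 2^n \<le> B / 2^k"
  using assms by (simp add: field_simps power_increasing)

lemma level_exists:
  fixes B p :: real assumes "0 < p" "p \<le> B"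
  shows "\<exists>n::nat. B / 2^Suc n < p \<and> p \<le> B / 2^n"
proof -
  have B: "0 < B" using assms by simp
  obtain N :: nat where N: "(1/2)^N < p / B" using real_arch_pow_inv[of "p/B" "1/2"] assms B by auto
  have "B / 2^N < p" using N B by (simp add: field_simps power_divide)
  moreover have "B / 2^Suc N \<le> B / 2^N" using pow_mono_div[OF B, of N "Suc N"] by simp
  ultimately have ex: "B / 2^Suc N < p" by linarith
  define n where "n = (LEAST m. B / 2^Suc m < p)"
  have P: "B / 2^Suc n < p" unfolding n_def by (rule LeastI[of _ N]) (rule ex)
  have Q: "p \<le> B / 2^n"
  proof (cases n)
    case 0 then show ?thesis using assms by simp
  next
    case (Suc m)
    have "\<not> B / 2^Suc m < p" using not_less_Least[of m "\<lambda>m. B / 2^Suc m < p"] Suc n_def by simp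
    then show ?thesis using Suc by simp
  qed
  show ?thesis using P Q by blast
qed

theorem theoremC:
  "\<exists>C::real. C > 0 \<and>
     (\<forall>f :: (real^'n::finite) \<times> (real^'m::finite) \<Rightarrow> real. Linfty f \<longrightarrow>
        (\<exists>S. sparse S \<and>
           (\<forall>x. strong_max f x \<le> ereal C * Pmax (1/2) (sparse_max S f) x)))"
proof (intro exI[of _ 2] conjI allI impI)
  show "(0::real) < 2" by simp
  fix f :: "(real^'n::finite) \<times> (real^'m::finite) \<Rightarrow> real"
  assume Lf: "Linfty f"
  then obtain B0 where fm: "f \<in> borel_measurable lebesgue" and B0: "AE x in lebesgue. \<bar>f x\<bar> \<le> B0"
    by (auto simp: Linfty_def)
  define B where "B = max B0 1"
  have Bpos: "0 < B" by (simp add: B_def)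
  have BAE: "AE x in lebesgue. \<bar>f x\<bar> \<le> B" using B0 by (rule eventually_mono) (simp add: B_def)
  define \<phi> where "\<phi> R = \<bar>avg f R\<bar>" for R
  define rects where "rects = (dyadic_rects :: ((real^'n) \<times> (real^'m)) set set)"
  have rp: "R \<in> sets lebesgue" "0 < measure lebesgue R" "emeasure lebesgue R < \<infinity>" if "R \<in> rects" for R
    using rect_props[of R] that by (auto simp: rects_def)
  have phiB: "\<phi> R \<le> B" if "R \<in> rects" for R
    unfolding \<phi>_def using avg_bound[OF fm BAE _] rect_props(2)[of R] that Bpos by (auto simp: rects_def)
  have phi0: "0 \<le> \<phi> R" for R by (simp add: \<phi>_def)
  define lev where "lev n = {R \<in> rects. B / 2^Suc n < \<phi> R \<and> \<phi> R \<le> B / 2^n}" for n :: nat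
  have levC: "countable (lev n)" for n
    using countable_rects by (rule countable_subset[rotated]) (auto simp: lev_def rects_def)
  have levsub: "lev n \<subseteq> rects" for n by (auto simp: lev_def)
  have levuniq: "n = k" if "R \<in> lev n" "R \<in> lev k" for R n k
  proof -
    have "k < Suc n" using that by (intro pow_cmp[OF Bpos]) (auto simp: lev_def)
    moreover have "n < Suc k" using that by (intro pow_cmp[OF Bpos]) (auto simp: lev_def)
    ultimately show ?thesis by simp
  qed
  define step where "step W n = (SOME p. greedyP lebesgue (lev n) W (fst p) (snd p))" for W n
  have gP: "greedyP lebesgue (lev n) W (fst (step W n)) (snd (step W n))" if "W \<in> sets lebesgue" for W n
  proof -
    have "\<exists>S E. greedyP lebesgue (lev n) W S E"
    proof (rule greedy[OF levC[of n]])
      fix R assume "R \<in> lev n"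
      then have "R \<in> rects" using levsub by blast
      then show "R \<in> sets lebesgue \<and> 0 < measure lebesgue R \<and> emeasure lebesgue R < \<infinity>"
        using rp by blast
    qed (rule that)
    then obtain S E where "greedyP lebesgue (lev n) W S E" by blast
    then have "\<exists>p. greedyP lebesgue (lev n) W (fst p) (snd p)" by (intro exI[of _ "(S, E)"]) simp
    then show ?thesis unfolding step_def by (rule someI_ex)
  qed
  define Wl where "Wl = rec_nat {} (\<lambda>n Wn. Wn \<union> \<Union>((snd (step Wn n)) ` fst (step Wn n)))"
  define Sn where "Sn n = fst (step (Wl n) n)" for n
  define En where "En n = snd (step (Wl n) n)" for n
  have Wl0: "Wl 0 = {}" by (simp add: Wl_def)
  have WlS: "Wl (Suc n) = Wl n \<union> \<Union>(En n ` Sn n)" for n by (simp add: Wl_def Sn_def En_def)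
  have Wlsets: "Wl n \<in> sets lebesgue" for n
  proof (induction n)
    case 0 then show ?case by (simp add: Wl0)
  next
    case (Suc n)
    have g: "greedyP lebesgue (lev n) (Wl n) (Sn n) (En n)" using gP[OF Suc] by (simp add: Sn_def En_def)
    have "countable (Sn n)" using g levC[of n] by (auto simp: greedyP_def intro: countable_subset)
    moreover have "\<forall>R\<in>Sn n. En n R \<in> sets lebesgue" using g by (auto simp: greedyP_def)
    ultimately show ?case using Suc by (auto simp: WlS intro!: sets.Un sets.countable_UN')
  qed
  have gPn: "greedyP lebesgue (lev n) (Wl n) (Sn n) (En n)" for n
    using gP[OF Wlsets[of n]] by (simp add: Sn_def En_def)
  have Snsub: "Sn n \<subseteq> lev n" for n using gPn[of n] by (simp add: greedyP_def)
  have Enprop: "En n R \<subseteq> R - Wl n" "En n R \<in> sets lebesgue" "measure lebesgue R / 2 \<le> measure lebesgue (En n R)"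
    if "R \<in> Sn n" for R n
    using gPn[of n] that by (auto simp: greedyP_def)
  have Endisj: "En n R \<inter> En n R' = {}" if "R \<in> Sn n" "R' \<in> Sn n" "R \<noteq> R'" for R R' n
    using gPn[of n] that by (auto simp: greedyP_def)
  have Encov: "measure lebesgue R / 2 < measure lebesgue (R \<inter> Wl (Suc n))" if "R \<in> lev n" "R \<notin> Sn n" for R n
    using gPn[of n] that by (auto simp: greedyP_def WlS)
  have Wlmono: "Wl n \<subseteq> Wl k" if "n \<le> k" for n k
    using that
  proof (induction k)
    case 0 then show ?case by simp
  next
    case (Suc k) then show ?case by (auto simp: WlS le_Suc_eq)
  qed
  have EnWl: "En n R \<subseteq> Wl (Suc n)" if "R \<in> Sn n" for R n using that by (auto simp: WlS)
  have WlU: "\<exists>k<m. \<exists>R'\<in>Sn k. y \<in> R'" if "y \<in> Wl m" for y m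
    using that
  proof (induction m)
    case 0 then show ?case by (simp add: Wl0)
  next
    case (Suc m)
    show ?case
    proof (cases "y \<in> Wl m")
      case True then show ?thesis using Suc by (meson less_Suc_eq)
    next
      case False
      then obtain R' where "R' \<in> Sn m" "y \<in> En m R'" using Suc.prems by (auto simp: WlS)
      then show ?thesis using Enprop(1)[of R' m] by blast
    qed
  qed
  define S where "S = (\<Union>n. Sn n)"
  define E where "E R = En (SOME n. R \<in> Sn n) R" for R
  have ER: "E R = En n R" if "R \<in> Sn n" for R n
  proof -
    have "R \<in> Sn (SOME n. R \<in> Sn n)" using that by (rule someI)
    then have "(SOME n. R \<in> Sn n) = n" using levuniq Snsub that by blast
    then show ?thesis by (simp add: E_def)
  qed
  have Srects: "S \<subseteq> rects" using Snsub levsub by (auto simp: S_def)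
  have sp: "sparse S"
    unfolding sparse_def
  proof (intro conjI exI[of _ E] ballI impI)
    show "S \<subseteq> dyadic_rects" using Srects by (simp add: rects_def)
  next
    fix R assume "R \<in> S"
    then obtain n where n: "R \<in> Sn n" by (auto simp: S_def)
    have R: "R \<in> rects" using n Snsub levsub by blast
    show "E R \<subseteq> R" using Enprop(1)[OF n] ER[OF n] by auto
    show "E R \<in> sets lebesgue" using Enprop(2)[OF n] ER[OF n] by auto
    have fR: "emeasure lebesgue R \<noteq> \<infinity>" using rp(3)[OF R] by simp
    have fE: "emeasure lebesgue (E R) \<noteq> \<infinity>"
    proof -
      have "emeasure lebesgue (E R) \<le> emeasure lebesgue R"
        using Enprop(1)[OF n] ER[OF n] rp(1)[OF R] by (intro emeasure_mono) auto
      then show ?thesis using fR by (auto simp: top_unique)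
    qed
    have "e2ennreal (ereal (1 / 2)) * emeasure lebesgue R = ennreal (measure lebesgue R / 2)"
      using emeasure_eq_ennreal_measure[OF fR[unfolded infinity_ennreal_def]]
      by (intro half_ennreal) (auto simp: measure_nonneg)
    also have "\<dots> \<le> ennreal (measure lebesgue (E R))"
      using Enprop(3)[OF n] ER[OF n] by (intro ennreal_leI) simp
    also have "\<dots> = emeasure lebesgue (E R)"
      using emeasure_eq_ennreal_measure[OF fE[unfolded infinity_ennreal_def]] by simp
    finally show "e2ennreal (ereal (1 / 2)) * emeasure lebesgue R \<le> emeasure lebesgue (E R)" .
  next
    fix R R' assume "R \<in> S" "R' \<in> S" "R \<noteq> R'"
    then obtain n k where n: "R \<in> Sn n" and k: "R' \<in> Sn k" by (auto simp: S_def)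
    have d: "En a Q \<inter> En b Q' = {}" if "Q \<in> Sn a" "Q' \<in> Sn b" "a < b" for Q Q' a b
    proof -
      have "En a Q \<subseteq> Wl b" using EnWl[OF that(1)] Wlmono[of "Suc a" b] that(3) by auto
      then show ?thesis using Enprop(1)[OF that(2)] by auto
    qed
    show "E R \<inter> E R' = {}"
    proof (cases n k rule: linorder_cases)
      case less then show ?thesis using d[OF n k] ER n k by simp
    next
      case equal then show ?thesis using Endisj[of R n R'] n k \<open>R \<noteq> R'\<close> ER by simp
    next
      case greater then show ?thesis using d[OF k n] ER n k by (simp add: Int_commute)
    qed
  qed
  define g where "g = sparse_max S f"
  have g0: "0 \<le> g y" for y unfolding g_def sparse_max_def by (rule Sup_upper) simp
  have gge: "ereal (\<phi> R') \<le> g y" if "R' \<in> S" "y \<in> R'" for R' y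
    unfolding g_def sparse_max_def \<phi>_def
    by (rule Sup_upper) (use that in \<open>auto intro!: image_eqI[of _ _ R']\<close>)
  have glt: "ereal t < \<bar>g y\<bar> \<longleftrightarrow> t < 0 \<or> (\<exists>R'\<in>S. y \<in> R' \<and> t < \<phi> R')" for t y
  proof -
    have "\<bar>g y\<bar> = g y" using g0[of y] by (simp add: abs_ereal_ge0)
    moreover have "ereal t < g y \<longleftrightarrow> (\<exists>z \<in> insert 0 ((\<lambda>R. ereal (\<bar>avg f R\<bar> * indicator R y)) ` S). ereal t < z)"
      unfolding g_def sparse_max_def by (rule less_Sup_iff)
    ultimately show ?thesis
      by (auto simp: \<phi>_def indicator_def split: if_splits)
  qed
  have Lvl: "{y \<in> R. ereal t < \<bar>g y\<bar>} \<in> sets lebesgue" if "R \<in> rects" for R t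
  proof -
    have cS: "countable {R' \<in> S. t < \<phi> R'}"
    proof -
      have "countable rects" unfolding rects_def by (rule countable_rects)
      moreover have "{R' \<in> S. t < \<phi> R'} \<subseteq> rects" using Srects by auto
      ultimately show ?thesis by (rule countable_subset[rotated])
    qed
    have "{y \<in> R. ereal t < \<bar>g y\<bar>} = (if t < 0 then R else R \<inter> \<Union>{R' \<in> S. t < \<phi> R'})"
    proof (cases "t < 0")
      case True then show ?thesis using glt[of t] by auto
    next
      case False
      have "ereal t < \<bar>g y\<bar> \<longleftrightarrow> y \<in> \<Union>{R' \<in> S. t < \<phi> R'}" for y
        using glt[of t y] False by blast
      then show ?thesis using False by auto
    qed
    moreover have "\<Union>{R' \<in> S. t < \<phi> R'} \<in> sets lebesgue"
      using cS Srects rp(1) by (intro sets.countable_Union) auto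
    ultimately show ?thesis using rp(1)[OF that] by auto
  qed
  have Pq: "ereal (\<phi> R / 2) \<le> Pquant (1/2) R (\<lambda>y. \<bar>g y\<bar>)" if R: "R \<in> rects" for R
    unfolding Pquant_def
  proof (rule Inf_greatest)
    fix z assume "z \<in> ereal ` {t. emeasure lebesgue {y \<in> R. ereal t < \<bar>g y\<bar>}
                       \<le> e2ennreal (ereal (1/2)) * emeasure lebesgue R}"
    then obtain t where z: "z = ereal t"
      and meas: "emeasure lebesgue {y \<in> R. ereal t < \<bar>g y\<bar>} \<le> e2ennreal (ereal (1/2)) * emeasure lebesgue R"
      by blast
    show "ereal (\<phi> R / 2) \<le> z"
    proof (rule ccontr)
      assume "\<not> ereal (\<phi> R / 2) \<le> z"
      then have tl: "t < \<phi> R / 2" using z by simp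
      have fR: "emeasure lebesgue R \<noteq> \<infinity>" using rp(3)[OF R] by simp
      obtain A where A: "A \<subseteq> {y \<in> R. ereal t < \<bar>g y\<bar>}" "A \<in> sets lebesgue"
        "measure lebesgue R / 2 < measure lebesgue A"
      proof (cases "t < 0 \<or> R \<in> S")
        case True
        have "R \<subseteq> {y \<in> R. ereal t < \<bar>g y\<bar>}"
        proof
          fix y assume y: "y \<in> R"
          have "t < \<phi> R" using tl phi0[of R] by linarith
          then have "t < 0 \<or> (\<exists>R'\<in>S. y \<in> R' \<and> t < \<phi> R')" using True y by blast
          then have "ereal t < \<bar>g y\<bar>" using glt[of t y] by blast
          then show "y \<in> {y \<in> R. ereal t < \<bar>g y\<bar>}" using y by blast
        qed
        moreover have "measure lebesgue R / 2 < measure lebesgue R" using rp(2)[OF R] by simp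
        ultimately show ?thesis using that rp(1)[OF R] by blast
      next
        case False
        then have t0: "0 \<le> t" and nS: "R \<notin> S" by auto
        have "0 < \<phi> R" using t0 tl by linarith
        then obtain n where n: "B / 2^Suc n < \<phi> R" "\<phi> R \<le> B / 2^n"
          using level_exists[of "\<phi> R" B] phiB[OF R] by blast
        have Rn: "R \<in> lev n" using n R by (simp add: lev_def)
        have "R \<notin> Sn n" using nS by (auto simp: S_def)
        then have cov: "measure lebesgue R / 2 < measure lebesgue (R \<inter> Wl (Suc n))"
          using Encov[OF Rn] by simp
        have "R \<inter> Wl (Suc n) \<subseteq> {y \<in> R. ereal t < \<bar>g y\<bar>}"
        proof
          fix y assume y: "y \<in> R \<inter> Wl (Suc n)"
          then obtain k R' where k: "k < Suc n" "R' \<in> Sn k" "y \<in> R'" using WlU by blast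
          have "R' \<in> lev k" using k Snsub by blast
          then have "B / 2^Suc k < \<phi> R'" by (simp add: lev_def)
          moreover have "B / 2^Suc n \<le> B / 2^Suc k" using pow_mono_div[OF Bpos, of "Suc k" "Suc n"] k by simp
          moreover have "\<phi> R / 2 \<le> B / 2^Suc n"
          proof -
            have "B / 2^Suc n = (B / 2^n) / 2" by simp
            then show ?thesis using n(2) by (simp add: divide_right_mono)
          qed
          ultimately have "t < \<phi> R'" using tl by linarith
          moreover have "R' \<in> S" using k by (auto simp: S_def)
          ultimately have "t < 0 \<or> (\<exists>R'\<in>S. y \<in> R' \<and> t < \<phi> R')" using k(3) by blast
          then have "ereal t < \<bar>g y\<bar>" using glt[of t y] by blast
          then show "y \<in> {y \<in> R. ereal t < \<bar>g y\<bar>}" using y by blast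
        qed
        then show ?thesis using that cov rp(1)[OF R] Wlsets by blast
      qed
      have AR: "A \<subseteq> R" using A(1) by auto
      have fA: "emeasure lebesgue A \<noteq> \<infinity>"
      proof -
        have "emeasure lebesgue A \<le> emeasure lebesgue R" using AR rp(1)[OF R] by (intro emeasure_mono) auto
        then show ?thesis using fR by (auto simp: top_unique)
      qed
      have "ennreal (measure lebesgue A) = emeasure lebesgue A"
        using emeasure_eq_ennreal_measure[OF fA[unfolded infinity_ennreal_def]] by simp
      also have "\<dots> \<le> emeasure lebesgue {y \<in> R. ereal t < \<bar>g y\<bar>}"
        using A(1) Lvl[OF R] by (intro emeasure_mono) auto
      also have "\<dots> \<le> e2ennreal (ereal (1/2)) * emeasure lebesgue R" by (rule meas)
      also have "\<dots> = ennreal (measure lebesgue R / 2)"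
        using emeasure_eq_ennreal_measure[OF fR[unfolded infinity_ennreal_def]]
        by (intro half_ennreal) (auto simp: measure_nonneg)
      finally have "measure lebesgue A \<le> measure lebesgue R / 2"
        by (subst (asm) ennreal_le_iff) (auto simp: measure_nonneg)
      then show False using A(3) by simp
    qed
  qed
  show "\<exists>S. sparse S \<and> (\<forall>x. strong_max f x \<le> ereal 2 * Pmax (1/2) (sparse_max S f) x)"
  proof (intro exI[of _ S] conjI allI)
    show "sparse S" by (rule sp)
    fix x
    show "strong_max f x \<le> ereal 2 * Pmax (1/2) (sparse_max S f) x"
      unfolding strong_max_def
    proof (rule SUP_least)
      fix R assume "R \<in> {R \<in> dyadic_rects. x \<in> R}"
      then have R: "R \<in> rects" "x \<in> R" by (auto simp: rects_def)
      have "Pquant (1/2) R (\<lambda>y. \<bar>g y\<bar>) \<le> Pmax (1/2) (sparse_max S f) x"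
        unfolding Pmax_def g_def by (rule SUP_upper) (use R in \<open>auto simp: rects_def\<close>)
      then have "ereal (\<phi> R / 2) \<le> Pmax (1/2) (sparse_max S f) x" using Pq[OF R(1)] by simp
      then have "ereal 2 * ereal (\<phi> R / 2) \<le> ereal 2 * Pmax (1/2) (sparse_max S f) x"
        by (rule ereal_mult_left_mono) simp
      then show "ereal \<bar>avg f R\<bar> \<le> ereal 2 * Pmax (1/2) (sparse_max S f) x" by (simp add: \<phi>_def)
    qed
  qed
qed

end
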